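(* Let $A>0$ and $C_2>0$ be such that $R:=(C_2/A)^{1/N}>1$. For $R_1>R$ set $C_1=C_2R_1^{sp}$ and define the radial function $$G(y)=\min\{A,\;C_2|y|^{-N},\;C_1|y|^{-(N+sp)}\},$$ so that $G=A$ for $|y|\le R$, $G=C_2|y|^{-N}$ for $R\le|y|\le R_1$ and $G=C_1|y|^{-(N+sp)}$ for $|y|\ge R_1$. Then there exists $R_*>R$ such that for every $R_1\ge R_*$ the inequality $$\mathcal L_{s,p}G(y)-\beta\,r^{1-N}\big(r^N G\big)'(r)\ge0,\qquad r=|y|,$$ holds for all $|y|\ge 2R_1$.
   Context: Fix $N\ge1$, $0<s<1$, $p>2$, $\Phi(z)=|z|^{p-2}z$, $\mathcal L_{s,p}u(x)=\mathrm{P.V.}\int_{\mathbb R^N}\Phi(u(x)-u(y))|x-y|^{-(N+sp)}dy$, and $\beta=1/(N(p-2)+sp)$. For a radial function $G(y)=G(r)$, $r^{1-N}(r^NG)'=\nabla\cdot(yG)$. *)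

theory Defs
  imports "HOL-Analysis.Analysis"
begin

definition Phi :: "real \<Rightarrow> real \<Rightarrow> real" where
  "Phi p z = \<bar>z\<bar> powr (p - 2) * z"

definition Lsp_trunc :: "real \<Rightarrow> real \<Rightarrow> (real^'n \<Rightarrow> real) \<Rightarrow> real^'n \<Rightarrow> real \<Rightarrow> real" where
  "Lsp_trunc s p u x eps =
     (LINT y : {y. dist x y \<ge> eps} | lebesgue.
        Phi p (u x - u y) * dist x y powr (- (real CARD('n) + s * p)))"

text \<open>The principal value integral L_{s,p} u (x) exists and equals L.\<close>
definition Lsp_has_value :: "real \<Rightarrow> real \<Rightarrow> (real^'n \<Rightarrow> real) \<Rightarrow> real^'n \<Rightarrow> real \<Rightarrow> bool" where
  "Lsp_has_value s p u x L \<longleftrightarrow>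
     (\<forall>eps>0. set_integrable lebesgue {y. dist x y \<ge> eps}
        (\<lambda>y. Phi p (u x - u y) * dist x y powr (- (real CARD('n) + s * p))))
     \<and> (Lsp_trunc s p u x \<longlongrightarrow> L) (at_right 0)"

definition Gprof :: "nat \<Rightarrow> real \<Rightarrow> real \<Rightarrow> real \<Rightarrow> real \<Rightarrow> real \<Rightarrow> real \<Rightarrow> real" where
  "Gprof N s p A C2 C1 r =
     (if r = 0 then A
      else min A (min (C2 * r powr (- real N)) (C1 * r powr (- (real N + s * p)))))"

end

theory Submission
  imports Defs
begin


lemma radial_eq_emeasure:
  fixes \<rho> x :: real
  assumes \<rho>: "\<rho> > 0"
  defines "N \<equiv> DIM('a::euclidean_space)"
  defines "V \<equiv> unit_ball_vol (real N)"
  shows "emeasure lborel (ball (0::'a) \<rho> \<inter> {h. x < norm h}) =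
         (\<integral>\<^sup>+t. ennreal (V * N * t^(N-1)) * indicator {0<..<\<rho>} t * indicator {x<..} t \<partial>lborel)"
proof -
  have N1: "N \<ge> 1" unfolding N_def by (simp add: DIM_positive Suc_leI)
  have ftc: "\<And>lo. 0 \<le> lo \<Longrightarrow> lo \<le> \<rho> \<Longrightarrow>
      (\<integral>\<^sup>+t. ennreal (V * N * t^(N-1)) * indicator {lo..\<rho>} t \<partial>lborel) = ennreal (V * \<rho>^N - V * lo^N)"
  proof -
    fix lo :: real assume lo: "0 \<le> lo" "lo \<le> \<rho>"
    have "((\<lambda>t. V * N * t^(N-1)) has_integral (V * \<rho>^N - V * lo^N)) {lo..\<rho>}"
    proof -
      have "((\<lambda>t. V * N * t^(N-1)) has_integral ((\<lambda>t. V * t^N) \<rho> - (\<lambda>t. V * t^N) lo)) {lo..\<rho>}"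
        apply (rule fundamental_theorem_of_calculus[OF lo(2)])
        unfolding has_real_derivative_iff_has_vector_derivative[symmetric]
        apply (auto intro!: derivative_eq_intros)
        done
      then show ?thesis by simp
    qed
    moreover have "\<And>t. t \<in> {lo..\<rho>} \<Longrightarrow> 0 \<le> V * N * t^(N-1)"
      using lo unfolding V_def by auto
    ultimately show "(\<integral>\<^sup>+t. ennreal (V * N * t^(N-1)) * indicator {lo..\<rho>} t \<partial>lborel) = ennreal (V * \<rho>^N - V * lo^N)"
      by (intro nn_integral_has_integral_lebesgue') auto
  qed
  have V0: "V \<ge> 0" unfolding V_def by simp
  consider "x < 0" | "0 \<le> x" "x < \<rho>" | "\<rho> \<le> x" by linarith
  then show ?thesis
  proof cases
    case 1
    have "ball (0::'a) \<rho> \<inter> {h. x < norm h} = ball 0 \<rho>" using 1 by (auto intro: less_le_trans[OF _ norm_ge_zero])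
    then have "emeasure lborel (ball (0::'a) \<rho> \<inter> {h. x < norm h}) = ennreal (V * \<rho>^N)"
      using emeasure_ball[of \<rho> "0::'a"] \<rho> unfolding V_def N_def by simp
    also have "\<dots> = (\<integral>\<^sup>+t. ennreal (V * N * t^(N-1)) * indicator {0..\<rho>} t \<partial>lborel)"
      using ftc[of 0] \<rho> N1 by (simp add: zero_power)
    also have "\<dots> = (\<integral>\<^sup>+t. ennreal (V * N * t^(N-1)) * indicator {0<..<\<rho>} t * indicator {x<..} t \<partial>lborel)"
      apply (intro nn_integral_cong_AE)
      apply (rule eventually_mono[OF eventually_conj[OF AE_lborel_singleton[of 0] AE_lborel_singleton[of \<rho>]]])
      using 1 by (auto split: split_indicator)
    finally show ?thesis .
  next
    case 2
    have eq: "ball (0::'a) \<rho> \<inter> {h. x < norm h} = ball 0 \<rho> - cball 0 x" by auto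
    have "emeasure lborel (ball (0::'a) \<rho> - cball 0 x) = emeasure lborel (ball (0::'a) \<rho>) - emeasure lborel (cball (0::'a) x)"
      using 2 by (intro emeasure_Diff) (auto simp: emeasure_cball)
    also have "\<dots> = ennreal (V * \<rho>^N - V * x^N)"
      using 2 \<rho> unfolding V_def N_def
      by (simp add: emeasure_ball emeasure_cball ennreal_minus power_mono mult_left_mono)
    also have "\<dots> = (\<integral>\<^sup>+t. ennreal (V * N * t^(N-1)) * indicator {x..\<rho>} t \<partial>lborel)"
      using ftc[of x] 2 by simp
    also have "\<dots> = (\<integral>\<^sup>+t. ennreal (V * N * t^(N-1)) * indicator {0<..<\<rho>} t * indicator {x<..} t \<partial>lborel)"
      apply (intro nn_integral_cong_AE)
      apply (rule eventually_mono[OF eventually_conj[OF AE_lborel_singleton[of x] AE_lborel_singleton[of \<rho>]]])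
      using 2 by (auto split: split_indicator)
    finally show ?thesis using eq by simp
  next
    case 3
    have "ball (0::'a) \<rho> \<inter> {h. x < norm h} = {}" using 3 by auto
    moreover have "(\<integral>\<^sup>+t. ennreal (V * N * t^(N-1)) * indicator {0<..<\<rho>} t * indicator {x<..} t \<partial>lborel) = 0"
      using 3 by (subst nn_integral_cong[where v="\<lambda>_. 0"]) (auto split: split_indicator)
    ultimately show ?thesis by simp
  qed
qed

lemma radial_ball:
  fixes \<rho> :: real and f :: "real \<Rightarrow> ennreal"
  assumes f[measurable]: "f \<in> borel_measurable borel" and \<rho>: "\<rho> > 0"
  defines "N \<equiv> DIM('a::euclidean_space)"
  defines "V \<equiv> unit_ball_vol (real N)"
  shows "(\<integral>\<^sup>+h. f (norm h) * indicator (ball (0::'a) \<rho>) h \<partial>lborel) =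
         (\<integral>\<^sup>+t. f t * (ennreal (V * N * t^(N-1)) * indicator {0<..<\<rho>} t) \<partial>lborel)"
proof -
  let ?M0 = "density lborel (indicator (ball (0::'a) \<rho>))"
  let ?M1 = "distr ?M0 borel norm"
  let ?g = "\<lambda>t. ennreal (V*N*t^(N-1)) * indicator {0<..<\<rho>} t"
  let ?M2 = "density lborel ?g"
  have [measurable]: "indicator (ball (0::'a) \<rho>) \<in> borel_measurable borel"
    by (intro borel_measurable_indicator) auto
  have e1: "emeasure ?M1 {x<..} = emeasure lborel (ball (0::'a) \<rho> \<inter> {h. x < norm h})" for x
  proof -
    have "emeasure ?M1 {x<..} = emeasure ?M0 (norm -` {x<..})"
      by (subst emeasure_distr) auto
    also have "\<dots> = (\<integral>\<^sup>+h. indicator (ball (0::'a) \<rho>) h * indicator (norm -` {x<..}) h \<partial>lborel)"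
    proof (rule emeasure_density)
      show "indicator (ball (0::'a) \<rho>) \<in> borel_measurable lborel"
        by (intro borel_measurable_indicator) auto
      have "(norm::'a\<Rightarrow>real) -` {x<..} = {h::'a. x < norm h}" by auto
      also have "\<dots> \<in> sets borel" by measurable
      finally show "(norm::'a\<Rightarrow>real) -` {x<..} \<in> sets lborel" by simp
    qed
    also have "\<dots> = (\<integral>\<^sup>+h. indicator (ball (0::'a) \<rho> \<inter> {h. x < norm h}) h \<partial>lborel)"
      by (rule nn_integral_cong) (simp split: split_indicator)
    also have "\<dots> = emeasure lborel (ball (0::'a) \<rho> \<inter> {h. x < norm h})"
      by (rule nn_integral_indicator) simp
    finally show ?thesis .
  qed
  have "?M1 = ?M2"
  proof (rule measure_eqI_lessThan)
    show "sets ?M1 = sets borel" "sets ?M2 = sets borel" by simp_all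
    fix x
    have "emeasure lborel (ball (0::'a) \<rho> \<inter> {h. x < norm h}) \<le> emeasure lborel (ball (0::'a) \<rho>)"
      by (rule emeasure_mono) auto
    also have "\<dots> < \<infinity>" by (rule emeasure_lborel_ball_finite)
    finally show "emeasure ?M1 {x<..} < \<infinity>" using e1 by simp
    show "emeasure ?M1 {x<..} = emeasure ?M2 {x<..}"
      unfolding e1 using radial_eq_emeasure[OF \<rho>, of x, where 'a='a]
      by (subst emeasure_density) (auto simp: N_def V_def mult.assoc)
  qed
  have "(\<integral>\<^sup>+h. f (norm h) * indicator (ball (0::'a) \<rho>) h \<partial>lborel) = (\<integral>\<^sup>+h. f (norm h) \<partial>?M0)"
    by (subst nn_integral_density) (auto simp: mult.commute)
  also have "\<dots> = (\<integral>\<^sup>+t. f t \<partial>?M1)"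
    by (subst nn_integral_distr) auto
  also have "\<dots> = (\<integral>\<^sup>+t. f t \<partial>?M2)" using \<open>?M1 = ?M2\<close> by simp
  also have "\<dots> = (\<integral>\<^sup>+t. ?g t * f t \<partial>lborel)"
    by (subst nn_integral_density) auto
  finally show ?thesis by (simp add: mult.commute)
qed

lemma radial_full:
  fixes f :: "real \<Rightarrow> ennreal"
  assumes f[measurable]: "f \<in> borel_measurable borel"
  defines "N \<equiv> DIM('a::euclidean_space)"
  defines "V \<equiv> unit_ball_vol (real N)"
  shows "(\<integral>\<^sup>+h. f (norm (h::'a)) \<partial>lborel) =
         (\<integral>\<^sup>+t. f t * (ennreal (V * N * t^(N-1)) * indicator {0<..} t) \<partial>lborel)"
proof -
  let ?F = "\<lambda>i (h::'a). f (norm h) * indicator (ball (0::'a) (real (Suc i))) h"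
  let ?G = "\<lambda>i t. f t * (ennreal (V * N * t^(N-1)) * indicator {0<..<real (Suc i)} t)"
  have [measurable]: "indicator (ball (0::'a) r) \<in> borel_measurable borel" for r
    by (intro borel_measurable_indicator) auto
  have l1: "(\<lambda>i. integral\<^sup>N lborel (?F i)) \<longlonglongrightarrow> (\<integral>\<^sup>+h. f (norm (h::'a)) \<partial>lborel)"
  proof (rule nn_integral_LIMSEQ)
    show "incseq ?F"
      by (intro incseq_SucI le_funI mult_left_mono) (auto simp: indicator_def)
    show "?F i \<in> borel_measurable lborel" for i by measurable
    fix h :: 'a
    obtain n :: nat where "norm h < n" using reals_Archimedean2 by blast
    then have "eventually (\<lambda>i. ?F i h = f (norm h)) sequentially"
      by (intro eventually_sequentiallyI[of n]) (simp add: indicator_def)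
    then show "(\<lambda>i. ?F i h) \<longlonglongrightarrow> f (norm h)" by (rule tendsto_eventually)
  qed
  have l2: "(\<lambda>i. integral\<^sup>N lborel (?G i)) \<longlonglongrightarrow> (\<integral>\<^sup>+t. f t * (ennreal (V * N * t^(N-1)) * indicator {0<..} t) \<partial>lborel)"
  proof (rule nn_integral_LIMSEQ)
    show "incseq ?G"
      by (intro incseq_SucI le_funI mult_left_mono) (auto simp: indicator_def)
    show "?G i \<in> borel_measurable lborel" for i by measurable
    fix t :: real
    obtain n :: nat where "t < n" using reals_Archimedean2 by blast
    then have "eventually (\<lambda>i. ?G i t = f t * (ennreal (V * N * t^(N-1)) * indicator {0<..} t)) sequentially"
      by (intro eventually_sequentiallyI[of n]) (simp add: indicator_def)
    then show "(\<lambda>i. ?G i t) \<longlonglongrightarrow> f t * (ennreal (V * N * t^(N-1)) * indicator {0<..} t)" by (rule tendsto_eventually)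
  qed
  have eq: "(\<lambda>i. integral\<^sup>N lborel (?F i)) = (\<lambda>i. integral\<^sup>N lborel (?G i))"
  proof
    fix i
    show "integral\<^sup>N lborel (?F i) = integral\<^sup>N lborel (?G i)"
      unfolding N_def V_def by (rule radial_ball[OF f]) simp
  qed
  show ?thesis using LIMSEQ_unique[OF l1[unfolded eq] l2] .
qed



lemma ball_powr_nn:
  fixes \<gamma> \<rho> :: real
  assumes \<gamma>: "\<gamma> > - real DIM('a::euclidean_space)" and \<rho>: "\<rho> > 0"
  defines "N \<equiv> DIM('a)"
  defines "V \<equiv> unit_ball_vol (real N)"
  shows "(\<integral>\<^sup>+h. ennreal (norm h powr \<gamma>) * indicator (ball (0::'a) \<rho>) h \<partial>lborel) =
         ennreal (V * N * (\<rho> powr (\<gamma> + N) / (\<gamma> + N)))"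
proof -
  have "(\<integral>\<^sup>+h. ennreal (norm h powr \<gamma>) * indicator (ball (0::'a) \<rho>) h \<partial>lborel) =
        (\<integral>\<^sup>+t. ennreal (t powr \<gamma>) * (ennreal (V * N * t^(N-1)) * indicator {0<..<\<rho>} t) \<partial>lborel)"
    unfolding N_def V_def by (rule radial_ball) (use \<rho> in auto)
  also have "\<dots> = (\<integral>\<^sup>+t. ennreal (V * N * t powr (\<gamma> + N - 1)) * indicator {0..\<rho>} t \<partial>lborel)"
  proof (intro nn_integral_cong_AE)
    show "AE t in lborel. ennreal (t powr \<gamma>) * (ennreal (V * N * t^(N-1)) * indicator {0<..<\<rho>} t) =
        ennreal (V * N * t powr (\<gamma> + N - 1)) * indicator {0..\<rho>} t"
    proof (rule eventually_mono[OF eventually_conj[OF AE_lborel_singleton[of 0] AE_lborel_singleton[of \<rho>]]])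
      fix t :: real assume t: "t \<noteq> 0 \<and> t \<noteq> \<rho>"
      show "ennreal (t powr \<gamma>) * (ennreal (V * N * t^(N-1)) * indicator {0<..<\<rho>} t) =
        ennreal (V * N * t powr (\<gamma> + N - 1)) * indicator {0..\<rho>} t"
      proof (cases "0 < t \<and> t < \<rho>")
        case True
        have N1: "N \<ge> 1" unfolding N_def by (simp add: Suc_leI)
        have "t powr \<gamma> * (V * N * t^(N-1)) = V * N * t powr (\<gamma> + N - 1)"
          using True N1 by (simp add: powr_realpow[symmetric] powr_add[symmetric] of_nat_diff algebra_simps)
        moreover have "0 \<le> V" unfolding V_def by simp
        ultimately show ?thesis using True by (simp add: ennreal_mult[symmetric] mult.assoc)
      next
        case False
        then show ?thesis using t by (auto simp: indicator_def)
      qed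
    qed
  qed
  also have "\<dots> = ennreal (V * N * (\<rho> powr (\<gamma> + N) / (\<gamma> + N)))"
  proof (rule nn_integral_has_integral_lebesgue')
    show "\<And>x. x \<in> {0..\<rho>} \<Longrightarrow> 0 \<le> V * N * x powr (\<gamma> + N - 1)" unfolding V_def by simp
    have "((\<lambda>x. x powr (\<gamma> + N - 1)) has_integral (\<rho> powr (\<gamma> + N - 1 + 1) / (\<gamma> + N - 1 + 1))) {0..\<rho>}"
      using \<gamma> \<rho> unfolding N_def by (intro has_integral_powr_from_0) auto
    then show "((\<lambda>x. V * N * x powr (\<gamma> + N - 1)) has_integral (V * N * (\<rho> powr (\<gamma> + N) / (\<gamma> + N)))) {0..\<rho>}"
      by (intro has_integral_mult_right) simp
  qed
  finally show ?thesis .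
qed

lemma tail_powr_nn:
  fixes \<alpha> \<rho> :: real
  assumes \<alpha>: "\<alpha> > real DIM('a::euclidean_space)" and \<rho>: "\<rho> > 0"
  defines "N \<equiv> DIM('a)"
  defines "V \<equiv> unit_ball_vol (real N)"
  shows "(\<integral>\<^sup>+h. ennreal (norm h powr (-\<alpha>)) * indicator {h::'a. \<rho> \<le> norm h} h \<partial>lborel) =
         ennreal (V * N * (\<rho> powr (N - \<alpha>) / (\<alpha> - N)))"
proof -
  have "(\<integral>\<^sup>+h. ennreal (norm h powr (-\<alpha>)) * indicator {h::'a. \<rho> \<le> norm h} h \<partial>lborel) =
        (\<integral>\<^sup>+h. (\<lambda>t. ennreal (t powr (-\<alpha>)) * indicator {\<rho>..} t) (norm (h::'a)) \<partial>lborel)"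
    by (rule nn_integral_cong) (simp add: indicator_def)
  also have "\<dots> = (\<integral>\<^sup>+t. (ennreal (t powr (-\<alpha>)) * indicator {\<rho>..} t) * (ennreal (V * N * t^(N-1)) * indicator {0<..} t) \<partial>lborel)"
    unfolding N_def V_def by (rule radial_full) measurable
  also have "\<dots> = (\<integral>\<^sup>+t. ennreal (V * N * t powr (real N - 1 - \<alpha>)) * indicator {\<rho>..} t \<partial>lborel)"
  proof (intro nn_integral_cong)
    fix t :: real
    show "(ennreal (t powr (-\<alpha>)) * indicator {\<rho>..} t) * (ennreal (V * N * t^(N-1)) * indicator {0<..} t) =
        ennreal (V * N * t powr (real N - 1 - \<alpha>)) * indicator {\<rho>..} t"
    proof (cases "\<rho> \<le> t")
      case True
      with \<rho> have t: "t > 0" by simp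
      have N1: "N \<ge> 1" unfolding N_def by (simp add: Suc_leI)
      have "t powr (-\<alpha>) * (V * N * t^(N-1)) = V * N * t powr (real N - 1 - \<alpha>)"
        using t N1 by (simp add: powr_realpow[symmetric] powr_add[symmetric] of_nat_diff algebra_simps)
      moreover have "0 \<le> V" unfolding V_def by simp
      ultimately show ?thesis using True t by (simp add: ennreal_mult[symmetric] mult.assoc)
    next
      case False
      then show ?thesis by (auto simp: indicator_def)
    qed
  qed
  also have "\<dots> = ennreal (V * N * (\<rho> powr (N - \<alpha>) / (\<alpha> - N)))"
  proof (rule nn_integral_has_integral_lebesgue')
    show "\<And>x. x \<in> {\<rho>..} \<Longrightarrow> 0 \<le> V * N * x powr (real N - 1 - \<alpha>)" unfolding V_def by simp
    have "((\<lambda>x. x powr (real N - 1 - \<alpha>)) has_integral (-(\<rho> powr (real N - 1 - \<alpha> + 1)) / (real N - 1 - \<alpha> + 1))) {\<rho>..}"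
      using \<alpha> \<rho> unfolding N_def by (intro has_integral_powr_to_inf) auto
    moreover have "-(\<rho> powr (real N - 1 - \<alpha> + 1)) / (real N - 1 - \<alpha> + 1) = \<rho> powr (N - \<alpha>) / (\<alpha> - N)"
      using \<alpha> unfolding N_def by (simp add: minus_divide_right)
    ultimately show "((\<lambda>x. V * N * x powr (real N - 1 - \<alpha>)) has_integral (V * N * (\<rho> powr (N - \<alpha>) / (\<alpha> - N)))) {\<rho>..}"
      by (intro has_integral_mult_right) simp
  qed
  finally show ?thesis .
qed



lemma powr_m1: "0 < (x::real) \<Longrightarrow> x powr (p - 1) = x powr (p - 2) * x"
  using powr_add[of x "p-2" 1] by simp

lemma Phi_minus: "Phi p (-x) = - Phi p x" by (simp add: Phi_def)

lemma Phi_nonneg_eq: "x \<ge> 0 \<Longrightarrow> Phi p x = x powr (p - 1)" if "p > 1"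
proof -
  assume x: "x \<ge> 0"
  show ?thesis
  proof (cases "x = 0")
    case True then show ?thesis by (simp add: Phi_def)
  next
    case False
    with x have "x > 0" by simp
    then show ?thesis by (simp add: Phi_def powr_diff powr_minus field_simps power2_eq_square)
  qed
qed

lemma Phi_abs: "p > 1 \<Longrightarrow> \<bar>Phi p x\<bar> = \<bar>x\<bar> powr (p - 1)"
proof -
  assume p: "p > 1"
  have "\<bar>Phi p x\<bar> = Phi p \<bar>x\<bar>" by (simp add: Phi_def abs_mult)
  also have "\<dots> = \<bar>x\<bar> powr (p - 1)" using p by (simp add: Phi_nonneg_eq)
  finally show ?thesis .
qed

lemma Phi_sign: "p > 1 \<Longrightarrow> Phi p x = (if x \<ge> 0 then x powr (p - 1) else - ((-x) powr (p - 1)))"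
  using Phi_nonneg_eq[of p x] Phi_nonneg_eq[of p "-x"] Phi_minus[of p x] by auto

lemma Phi_mono: assumes p: "p > 1" and xy: "x \<le> y" shows "Phi p x \<le> Phi p y"
proof -
  have pm: "0 < p - 1" using p by simp
  consider "0 \<le> x" | "x < 0" "0 \<le> y" | "y < 0" using xy by linarith
  then show ?thesis
  proof cases
    case 1 then show ?thesis using p xy by (simp add: Phi_sign powr_mono2)
  next
    case 2 then show ?thesis using p by (simp add: Phi_sign) (smt (verit) powr_ge_zero)
  next
    case 3 then show ?thesis using p xy by (simp add: Phi_sign powr_mono2)
  qed
qed

lemma Phi_zero[simp]: "Phi p 0 = 0" by (simp add: Phi_def)

lemma pow_lip_aux:
  fixes a b p :: real
  assumes p: "p \<ge> 2" and b: "0 \<le> b" and ba: "b \<le> a"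
  shows "a powr (p - 1) - b powr (p - 1) \<le> (p - 1) * a powr (p - 2) * (a - b)"
proof (cases "b = a")
  case True then show ?thesis by simp
next
  case False
  with ba have ba': "b < a" by simp
  show ?thesis
  proof (cases "b = 0")
    case True
    have "a powr (p - 1) = a powr (p - 2) * a"
      using ba' True b by (simp add: powr_m1)
    moreover have "a powr (p - 2) * a \<le> (p - 1) * a powr (p - 2) * a"
      using p ba' True by (intro mult_right_mono) (auto intro: mult_left_le_one_le[where x="a powr (p-2)" and y="1", simplified] simp: mult_le_cancel_right1)
    ultimately show ?thesis using True p by simp
  next
    case False
    with b have b0: "b > 0" by simp
    have d: "\<And>x. b \<le> x \<Longrightarrow> x \<le> a \<Longrightarrow> ((\<lambda>t. t powr (p - 1)) has_real_derivative (\<lambda>t. (p - 1) * t powr (p - 1 - 1)) x) (at x)"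
      using b0 by (intro has_real_derivative_powr) auto
    obtain z where z: "b < z" "z < a" "a powr (p - 1) - b powr (p - 1) = (a - b) * ((p - 1) * z powr (p - 1 - 1))"
      using MVT2[OF ba' d] by blast
    have "z powr (p - 2) \<le> a powr (p - 2)" using z b0 p by (intro powr_mono2) auto
    then have "(a - b) * ((p - 1) * z powr (p - 2)) \<le> (a - b) * ((p - 1) * a powr (p - 2))"
      using ba' p by (intro mult_left_mono) auto
    then show ?thesis using z by (simp add: algebra_simps)
  qed
qed

lemma Phi_lip:
  assumes p: "p \<ge> 2"
  shows "\<bar>Phi p a - Phi p b\<bar> \<le> (p - 1) * max \<bar>a\<bar> \<bar>b\<bar> powr (p - 2) * \<bar>a - b\<bar>"
proof -
  have p1: "p > 1" using p by simp
  have same: "\<bar>Phi p a - Phi p b\<bar> \<le> (p - 1) * max \<bar>a\<bar> \<bar>b\<bar> powr (p - 2) * \<bar>a - b\<bar>"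
    if "0 \<le> a" "0 \<le> b" for a b :: real
  proof (cases "b \<le> a")
    case True
    have "Phi p b \<le> Phi p a" using Phi_mono[OF p1 True] .
    then show ?thesis using pow_lip_aux[OF p that(2) True] that True p1
      by (simp add: Phi_nonneg_eq max_def)
  next
    case False
    have "Phi p a \<le> Phi p b" using Phi_mono[OF p1] False by simp
    then show ?thesis using pow_lip_aux[OF p that(1), of b] that False p1
      by (simp add: Phi_nonneg_eq max_def)
  qed
  have opp: "\<bar>Phi p a - Phi p b\<bar> \<le> (p - 1) * max \<bar>a\<bar> \<bar>b\<bar> powr (p - 2) * \<bar>a - b\<bar>"
    if "0 \<le> a" "b < 0" for a b :: real
  proof -
    let ?m = "max \<bar>a\<bar> \<bar>b\<bar>"
    have m0: "0 \<le> ?m" by simp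
    have ea: "a powr (p - 1) \<le> ?m powr (p - 2) * a"
    proof (cases "a = 0")
      case True then show ?thesis by simp
    next
      case False
      then have "a powr (p - 1) = a powr (p - 2) * a" using that by (simp add: powr_m1)
      also have "\<dots> \<le> ?m powr (p - 2) * a" using that p by (intro mult_right_mono powr_mono2) auto
      finally show ?thesis .
    qed
    have eb: "(-b) powr (p - 1) \<le> ?m powr (p - 2) * (-b)"
    proof -
      have "(-b) powr (p - 1) = (-b) powr (p - 2) * (-b)" using that by (simp add: powr_m1)
      also have "\<dots> \<le> ?m powr (p - 2) * (-b)" using that p by (intro mult_right_mono powr_mono2) auto
      finally show ?thesis .
    qed
    have "\<bar>Phi p a - Phi p b\<bar> = a powr (p - 1) + (-b) powr (p - 1)"
      using that p1 by (simp add: Phi_sign)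
    also have "\<dots> \<le> ?m powr (p - 2) * \<bar>a - b\<bar>" using ea eb that by (simp add: algebra_simps)
    also have "\<dots> \<le> (p - 1) * ?m powr (p - 2) * \<bar>a - b\<bar>"
      using p by (intro mult_right_mono) (auto intro: mult_left_le_one_le simp: mult_le_cancel_right1)
    finally show ?thesis .
  qed
  consider "0 \<le> a" "0 \<le> b" | "0 \<le> a" "b < 0" | "a < 0" "0 \<le> b" | "a < 0" "b < 0" by linarith
  then show ?thesis
  proof cases
    case 1 then show ?thesis by (rule same)
  next
    case 2 then show ?thesis by (rule opp)
  next
    case 3 then show ?thesis using opp[of b a] by (simp add: abs_minus_commute max.commute)
  next
    case 4
    have "\<bar>Phi p (-a) - Phi p (-b)\<bar> \<le> (p - 1) * max \<bar>-a\<bar> \<bar>-b\<bar> powr (p - 2) * \<bar>(-a) - (-b)\<bar>"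
      using 4 by (intro same) auto
    then show ?thesis by (simp add: Phi_minus abs_minus_commute)
  qed
qed

lemma Phi_sum_bound:
  assumes p: "p \<ge> 2"
  shows "\<bar>Phi p u + Phi p v\<bar> \<le> (p - 1) * max \<bar>u\<bar> \<bar>v\<bar> powr (p - 2) * \<bar>u + v\<bar>"
  using Phi_lip[OF p, of u "-v"] by (simp add: Phi_minus)



lemma lip_interval:
  fixes f f' :: "real \<Rightarrow> real"
  assumes d: "\<And>z. lo \<le> z \<Longrightarrow> z \<le> hi \<Longrightarrow> (f has_real_derivative f' z) (at z)"
    and b: "\<And>z. lo \<le> z \<Longrightarrow> z \<le> hi \<Longrightarrow> \<bar>f' z\<bar> \<le> K"
    and x: "lo \<le> x" "x \<le> hi" and y: "lo \<le> y" "y \<le> hi"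
  shows "\<bar>f x - f y\<bar> \<le> K * \<bar>x - y\<bar>"
proof -
  have main: "\<bar>f v - f u\<bar> \<le> K * \<bar>v - u\<bar>" if uv: "u < v" "lo \<le> u" "v \<le> hi" for u v
  proof -
    obtain z where z: "u < z" "z < v" "f v - f u = (v - u) * f' z"
      using MVT2[OF uv(1), of f f'] d uv by (meson order.trans less_imp_le)
    have "\<bar>f' z\<bar> \<le> K" using b z uv by auto
    then have "\<bar>v - u\<bar> * \<bar>f' z\<bar> \<le> \<bar>v - u\<bar> * K" by (intro mult_left_mono) auto
    then show ?thesis using z by (simp add: abs_mult mult.commute)
  qed
  consider "x < y" | "x = y" | "y < x" by linarith
  then show ?thesis
  proof cases
    case 1 then show ?thesis using main[of x y] x y by (simp add: abs_minus_commute)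
  next
    case 2 then show ?thesis by simp
  next
    case 3 then show ?thesis using main[of y x] x y by simp
  qed
qed

lemma phi_lip:
  fixes q a t r :: real
  assumes q: "q > 0" and a: "a > 0" and t: "t \<ge> a" and r: "r \<ge> a"
  shows "\<bar>t powr (-q) - r powr (-q)\<bar> \<le> q * a powr (-q-1) * \<bar>t - r\<bar>"
proof (rule lip_interval[where lo="min t r" and hi="max t r" and f'="\<lambda>z. (-q) * z powr (-q - 1)"])
  fix z assume z: "min t r \<le> z" "z \<le> max t r"
  then have z0: "z \<ge> a" using t r by linarith
  then show "((\<lambda>z. z powr (-q)) has_real_derivative (-q) * z powr (-q - 1)) (at z)"
    using has_real_derivative_powr[of z "-q"] a by simp
  have "z powr (-q-1) \<le> a powr (-q-1)" using z0 a q by (intro powr_mono2') auto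
  then show "\<bar>(-q) * z powr (-q - 1)\<bar> \<le> q * a powr (-q-1)"
    using q by (simp add: abs_mult)
qed auto

lemma phi_taylor:
  fixes q a t r :: real
  assumes q: "q > 0" and a: "a > 0" and t: "t \<ge> a" and r: "r \<ge> a"
  shows "\<bar>t powr (-q) - r powr (-q) + q * r powr (-q-1) * (t - r)\<bar> \<le> q * (q+1) * a powr (-q-2) * (t - r)^2"
proof -
  let ?M = "q * (q+1) * a powr (-q-2)"
  have dphi: "\<bar>(-q) * z powr (-q-1) - (-q) * r powr (-q-1)\<bar> \<le> ?M * \<bar>z - r\<bar>" if z: "z \<ge> a" for z
  proof (rule lip_interval[where lo="min z r" and hi="max z r" and f'="\<lambda>w. (-q) * ((-q-1) * w powr (-q - 1 - 1))"])
    fix w assume w: "min z r \<le> w" "w \<le> max z r"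
    then have w0: "w \<ge> a" using z r by linarith
    then show "((\<lambda>w. (-q) * w powr (-q-1)) has_real_derivative (-q) * ((-q-1) * w powr (-q - 1 - 1))) (at w)"
      using a by (intro DERIV_cmult has_real_derivative_powr) auto
    have "w powr (-q-2) \<le> a powr (-q-2)" using w0 a q by (intro powr_mono2') auto
    then have "q*(q+1) * w powr (-q-2) \<le> ?M" using q by (intro mult_left_mono) auto
    moreover have "\<bar>(-q) * ((-q-1) * w powr (-q - 1 - 1))\<bar> = q*(q+1) * w powr (-q-2)"
      using q by (simp add: abs_mult algebra_simps)
    ultimately show "\<bar>(-q) * ((-q-1) * w powr (-q - 1 - 1))\<bar> \<le> ?M" by simp
  qed auto
  let ?psi = "\<lambda>x. x powr (-q) - r powr (-q) + q * r powr (-q-1) * (x - r)"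
  have "\<bar>?psi t - ?psi r\<bar> \<le> (?M * \<bar>t - r\<bar>) * \<bar>t - r\<bar>"
  proof (rule lip_interval[where lo="min t r" and hi="max t r" and f'="\<lambda>x. (-q) * x powr (-q-1) + q * r powr (-q-1)"])
    fix z assume z: "min t r \<le> z" "z \<le> max t r"
    then have z0: "z \<ge> a" using t r by linarith
    show "(?psi has_real_derivative (-q) * z powr (-q-1) + q * r powr (-q-1)) (at z)"
      using z0 a by (auto intro!: derivative_eq_intros has_real_derivative_powr[where r="-q", simplified, THEN DERIV_chain2])
    have "\<bar>(-q) * z powr (-q-1) + q * r powr (-q-1)\<bar> \<le> ?M * \<bar>z - r\<bar>"
      using dphi[OF z0] by simp
    also have "\<dots> \<le> ?M * \<bar>t - r\<bar>"
      using z q a by (intro mult_left_mono) (auto simp: abs_le_iff)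
    finally show "\<bar>(-q) * z powr (-q-1) + q * r powr (-q-1)\<bar> \<le> ?M * \<bar>t - r\<bar>" .
  qed auto
  then show ?thesis by (simp add: power2_eq_square mult.assoc)
qed



lemma ball_powr_bochner:
  fixes \<gamma> \<rho> :: real
  assumes \<gamma>: "\<gamma> > - real DIM('a::euclidean_space)" and \<rho>: "\<rho> > 0"
  shows "has_bochner_integral lborel (\<lambda>h::'a. norm h powr \<gamma> * indicator (ball 0 \<rho>) h)
     (unit_ball_vol (real DIM('a)) * DIM('a) * (\<rho> powr (\<gamma> + DIM('a)) / (\<gamma> + DIM('a))))"
proof (rule has_bochner_integral_nn_integral)
  show "(\<lambda>h::'a. norm h powr \<gamma> * indicator (ball 0 \<rho>) h) \<in> borel_measurable lborel"
    by (intro borel_measurable_times borel_measurable_indicator) auto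
  show "AE x in lborel. 0 \<le> norm x powr \<gamma> * indicator (ball (0::'a) \<rho>) x" by simp
  show "0 \<le> unit_ball_vol (real DIM('a)) * DIM('a) * (\<rho> powr (\<gamma> + DIM('a)) / (\<gamma> + DIM('a)))"
    using \<gamma> by simp
  have "(\<integral>\<^sup>+x. ennreal (norm x powr \<gamma> * indicator (ball (0::'a) \<rho>) x) \<partial>lborel) =
        (\<integral>\<^sup>+h. ennreal (norm h powr \<gamma>) * indicator (ball (0::'a) \<rho>) h \<partial>lborel)"
    by (rule nn_integral_cong) (simp add: indicator_def)
  also have "\<dots> = ennreal (unit_ball_vol (real DIM('a)) * DIM('a) * (\<rho> powr (\<gamma> + DIM('a)) / (\<gamma> + DIM('a))))"
    by (rule ball_powr_nn[OF \<gamma> \<rho>])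
  finally show "(\<integral>\<^sup>+x. ennreal (norm x powr \<gamma> * indicator (ball (0::'a) \<rho>) x) \<partial>lborel) =
     ennreal (unit_ball_vol (real DIM('a)) * DIM('a) * (\<rho> powr (\<gamma> + DIM('a)) / (\<gamma> + DIM('a))))" .
qed

lemma tail_powr_bochner:
  fixes \<alpha> \<rho> :: real
  assumes \<alpha>: "\<alpha> > real DIM('a::euclidean_space)" and \<rho>: "\<rho> > 0"
  shows "has_bochner_integral lborel (\<lambda>h::'a. norm h powr (-\<alpha>) * indicator {h. \<rho> \<le> norm h} h)
     (unit_ball_vol (real DIM('a)) * DIM('a) * (\<rho> powr (DIM('a) - \<alpha>) / (\<alpha> - DIM('a))))"
proof (rule has_bochner_integral_nn_integral)
  have [measurable]: "{h::'a. \<rho> \<le> norm h} \<in> sets borel" by measurable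
  show "(\<lambda>h::'a. norm h powr (-\<alpha>) * indicator {h. \<rho> \<le> norm h} h) \<in> borel_measurable lborel"
    by measurable
  show "AE x in lborel. 0 \<le> norm x powr (-\<alpha>) * indicator {h::'a. \<rho> \<le> norm h} x" by simp
  show "0 \<le> unit_ball_vol (real DIM('a)) * DIM('a) * (\<rho> powr (DIM('a) - \<alpha>) / (\<alpha> - DIM('a)))"
    using \<alpha> by simp
  have "(\<integral>\<^sup>+x. ennreal (norm x powr (-\<alpha>) * indicator {h::'a. \<rho> \<le> norm h} x) \<partial>lborel) =
        (\<integral>\<^sup>+h. ennreal (norm h powr (-\<alpha>)) * indicator {h::'a. \<rho> \<le> norm h} h \<partial>lborel)"
    by (rule nn_integral_cong) (simp add: indicator_def)
  also have "\<dots> = ennreal (unit_ball_vol (real DIM('a)) * DIM('a) * (\<rho> powr (DIM('a) - \<alpha>) / (\<alpha> - DIM('a))))"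
    by (rule tail_powr_nn[OF \<alpha> \<rho>])
  finally show "(\<integral>\<^sup>+x. ennreal (norm x powr (-\<alpha>) * indicator {h::'a. \<rho> \<le> norm h} x) \<partial>lborel) =
     ennreal (unit_ball_vol (real DIM('a)) * DIM('a) * (\<rho> powr (DIM('a) - \<alpha>) / (\<alpha> - DIM('a))))" .
qed

lemma lborel_distr_affine1:
  fixes y :: "'a::euclidean_space" and c :: real
  assumes c: "\<bar>c\<bar> = 1"
  shows "distr lborel borel (\<lambda>x. y + c *\<^sub>R x) = lborel"
proof -
  have "c \<noteq> 0" using c by auto
  from lborel_affine[OF this, of y] c show ?thesis by (simp add: density_1)
qed

lemma integral_affine1:
  fixes y :: "'a::euclidean_space" and c :: real and f :: "'a \<Rightarrow> real"
  assumes c: "\<bar>c\<bar> = 1" and f[measurable]: "f \<in> borel_measurable borel"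
  shows "integral\<^sup>L lborel f = integral\<^sup>L lborel (\<lambda>x. f (y + c *\<^sub>R x))"
    and "integrable lborel f \<longleftrightarrow> integrable lborel (\<lambda>x. f (y + c *\<^sub>R x))"
proof -
  have m: "(\<lambda>x. y + c *\<^sub>R x) \<in> measurable lborel borel" by simp
  show "integral\<^sup>L lborel f = integral\<^sup>L lborel (\<lambda>x. f (y + c *\<^sub>R x))"
    using integral_distr[OF m, of f] lborel_distr_affine1[OF c, of y] by simp
  show "integrable lborel f \<longleftrightarrow> integrable lborel (\<lambda>x. f (y + c *\<^sub>R x))"
    using integrable_distr_eq[OF m, of f] lborel_distr_affine1[OF c, of y] by simp
qed



lemma Gprof_nonneg: "0 \<le> A \<Longrightarrow> 0 \<le> C2 \<Longrightarrow> 0 \<le> C1 \<Longrightarrow> 0 \<le> Gprof N s p A C2 C1 t"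
  by (simp add: Gprof_def)

lemma Gprof_le_A: "Gprof N s p A C2 C1 t \<le> A"
  by (simp add: Gprof_def)

lemma Gprof_le_C2: "t \<noteq> 0 \<Longrightarrow> Gprof N s p A C2 C1 t \<le> C2 * t powr (- real N)"
  by (simp add: Gprof_def)

lemma Gprof_far:
  assumes C1: "C1 = C2 * R1 powr (s*p)" and R1: "R1 > 0" and C2: "C2 > 0" and sp: "s * p > 0"
    and hR: "C2 * R1 powr (- real N) \<le> A" and t: "t \<ge> R1"
  shows "Gprof N s p A C2 C1 t = C1 * t powr (-(real N + s*p))"
proof -
  have t0: "t > 0" using R1 t by simp
  have "R1 powr (s*p) \<le> t powr (s*p)" using R1 t sp by (intro powr_mono2) auto
  then have "C1 * t powr (-(real N + s*p)) \<le> C2 * t powr (s*p) * t powr (-(real N + s*p))"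
    using C1 C2 by (intro mult_right_mono) auto
  also have "\<dots> = C2 * t powr (- real N)" using t0 by (simp add: mult.assoc powr_add[symmetric])
  finally have 1: "C1 * t powr (-(real N + s*p)) \<le> C2 * t powr (- real N)" .
  have "t powr (- real N) \<le> R1 powr (- real N)" using R1 t by (intro powr_mono2') auto
  then have "C2 * t powr (- real N) \<le> A" using C2 hR by (smt (verit) mult_left_mono)
  with 1 show ?thesis using t0 by (simp add: Gprof_def)
qed

lemma Gprof_measurable[measurable]: "Gprof N s p A C2 C1 \<in> borel_measurable borel"
  unfolding Gprof_def by measurable

lemma Phi_measurable[measurable]: "Phi p \<in> borel_measurable borel"
  unfolding Phi_def by measurable

lemma norm_pm_sum_ge:
  fixes y h :: "'a::real_normed_vector"
  shows "2 * norm y \<le> norm (y + h) + norm (y - h)"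
proof -
  have "norm ((y + h) + (y - h)) \<le> norm (y + h) + norm (y - h)" by (rule norm_triangle_ineq)
  moreover have "(y + h) + (y - h) = 2 *\<^sub>R y" by (simp add: scaleR_2)
  ultimately show ?thesis by simp
qed

lemma norm_pm_sum_le:
  fixes y h :: "'a::real_inner"
  assumes y: "y \<noteq> 0"
  shows "norm (y + h) + norm (y - h) \<le> 2 * norm y + norm h ^ 2 / norm y"
proof -
  have par: "norm (y + h) ^ 2 + norm (y - h) ^ 2 = 2 * norm y ^ 2 + 2 * norm h ^ 2"
    by (simp add: power2_norm_eq_inner inner_add_left inner_add_right inner_diff_left inner_diff_right inner_commute)
  have "(norm (y + h) + norm (y - h)) ^ 2 \<le> 2 * (norm (y + h) ^ 2 + norm (y - h) ^ 2)"
    by (smt (verit) power2_sum sum_squares_bound zero_le_power2 power2_diff)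
  also have "\<dots> = 4 * norm y ^ 2 + 4 * norm h ^ 2" using par by simp
  also have "\<dots> \<le> 4 * norm y ^ 2 + 4 * norm h ^ 2 + (norm h ^ 2 / norm y) ^ 2" by simp
  also have "\<dots> = (2 * norm y + norm h ^ 2 / norm y) ^ 2"
    using y by (simp add: power2_sum field_simps power2_eq_square)
  finally show ?thesis
    by (rule power2_le_imp_le) (use y in simp)
qed



lemma near_bound:
  fixes y h :: "'a::real_inner" and g :: "real \<Rightarrow> real"
  assumes q: "q > 0" and p: "p \<ge> 2" and C1: "C1 \<ge> 0" and a: "a > 0"
    and ny: "norm y = 2 * a" and nh: "norm h \<le> a"
    and gfar: "\<And>t. t \<ge> a \<Longrightarrow> g t = C1 * t powr (-q)"
  defines "F \<equiv> \<lambda>z. Phi p (g (norm y) - g (norm z)) * dist y z powr (-q)"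
  defines "L0 \<equiv> q * a powr (-q-1)"
  defines "M \<equiv> q * (q+1) * a powr (-q-2)"
  shows "\<bar>(F (y + h) + F (y - h)) / 2\<bar> \<le> (p - 1) / 2 * (C1 * L0) powr (p - 2) * (C1 * (3 * M)) * norm h powr (p - q)"
proof (cases "h = 0")
  case True then show ?thesis by (simp add: F_def)
next
  case False
  then have h0: "norm h > 0" by simp
  define r where "r = norm y"
  define tp where "tp = norm (y + h)"
  define tm where "tm = norm (y - h)"
  have r: "r = 2 * a" using ny r_def by simp
  have y0: "y \<noteq> 0" using ny a by auto
  have "norm y \<le> norm (y + h) + norm h" using norm_triangle_ineq4[of "y+h" h] by simp
  then have tpa: "tp \<ge> a" using nh ny tp_def by simp
  have "norm y \<le> norm (y - h) + norm h" using norm_triangle_ineq[of "y-h" h] by simp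
  then have tma: "tm \<ge> a" using nh ny tm_def by simp
  have dtp: "\<bar>tp - r\<bar> \<le> norm h" using norm_triangle_ineq3[of "y+h" y] tp_def r_def by simp
  have dtm: "\<bar>tm - r\<bar> \<le> norm h" using norm_triangle_ineq3[of "y-h" y] tm_def r_def by simp
  have ra: "r \<ge> a" using r a by simp
  define u where "u = C1 * (tp powr (-q) - r powr (-q))"
  define v where "v = C1 * (tm powr (-q) - r powr (-q))"
  have Fp: "F (y + h) = - Phi p u * norm h powr (-q)"
  proof -
    have "g (norm y) - g (norm (y + h)) = - u"
      unfolding u_def using gfar[OF tpa] gfar[OF ra] tp_def r_def by (simp add: algebra_simps)
    moreover have "dist y (y + h) = norm h" by (simp add: dist_norm)
    ultimately show ?thesis unfolding F_def by (simp add: Phi_minus)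
  qed
  have Fm: "F (y - h) = - Phi p v * norm h powr (-q)"
  proof -
    have "g (norm y) - g (norm (y - h)) = - v"
      unfolding v_def using gfar[OF tma] gfar[OF ra] tm_def r_def by (simp add: algebra_simps)
    moreover have "dist y (y - h) = norm h" by (simp add: dist_norm)
    ultimately show ?thesis unfolding F_def by (simp add: Phi_minus)
  qed
  have S: "\<bar>(F (y + h) + F (y - h)) / 2\<bar> = \<bar>Phi p u + Phi p v\<bar> / 2 * norm h powr (-q)"
  proof -
    have "(F (y + h) + F (y - h)) / 2 = - ((Phi p u + Phi p v) / 2 * norm h powr (-q))"
      unfolding Fp Fm by (simp add: algebra_simps)
    then show ?thesis by (simp add: abs_mult)
  qed
  have ub: "\<bar>u\<bar> \<le> C1 * L0 * norm h"
  proof -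
    have "\<bar>tp powr (-q) - r powr (-q)\<bar> \<le> L0 * \<bar>tp - r\<bar>" unfolding L0_def by (rule phi_lip[OF q a tpa ra])
    also have "\<dots> \<le> L0 * norm h" using dtp unfolding L0_def using q by (intro mult_left_mono) auto
    finally show ?thesis unfolding u_def using C1 by (simp add: abs_mult mult.assoc mult_left_mono)
  qed
  have vb: "\<bar>v\<bar> \<le> C1 * L0 * norm h"
  proof -
    have "\<bar>tm powr (-q) - r powr (-q)\<bar> \<le> L0 * \<bar>tm - r\<bar>" unfolding L0_def by (rule phi_lip[OF q a tma ra])
    also have "\<dots> \<le> L0 * norm h" using dtm unfolding L0_def using q by (intro mult_left_mono) auto
    finally show ?thesis unfolding v_def using C1 by (simp add: abs_mult mult.assoc mult_left_mono)
  qed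
  have uvb: "\<bar>u + v\<bar> \<le> C1 * (3 * M) * norm h ^ 2"
  proof -
    define ep where "ep = tp powr (-q) - r powr (-q) + q * r powr (-q-1) * (tp - r)"
    define em where "em = tm powr (-q) - r powr (-q) + q * r powr (-q-1) * (tm - r)"
    have "\<bar>ep\<bar> \<le> M * (tp - r)^2" unfolding ep_def M_def by (rule phi_taylor[OF q a tpa ra])
    also have "(tp - r)^2 \<le> norm h ^ 2" using dtp by (metis abs_ge_zero power2_abs power_mono)
    finally have ep: "\<bar>ep\<bar> \<le> M * norm h ^ 2" using M_def q a by (smt (verit) mult_left_mono zero_le_power2 mult_nonneg_nonneg powr_ge_zero)
    have "\<bar>em\<bar> \<le> M * (tm - r)^2" unfolding em_def M_def by (rule phi_taylor[OF q a tma ra])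
    also have "(tm - r)^2 \<le> norm h ^ 2" using dtm by (metis abs_ge_zero power2_abs power_mono)
    finally have em: "\<bar>em\<bar> \<le> M * norm h ^ 2" using M_def q a by (smt (verit) mult_left_mono zero_le_power2 mult_nonneg_nonneg powr_ge_zero)
    have s1: "0 \<le> tp + tm - 2 * r" using norm_pm_sum_ge[of y h] tp_def tm_def r_def by simp
    have s2: "tp + tm - 2 * r \<le> norm h ^ 2 / r" using norm_pm_sum_le[OF y0, of h] tp_def tm_def r_def by simp
    have "q * r powr (-q-1) * (tp + tm - 2 * r) \<le> q * r powr (-q-1) * (norm h ^ 2 / r)"
      using s2 q by (intro mult_left_mono) auto
    also have "\<dots> = q * r powr (-q-2) * norm h ^ 2"
    proof -
      have "r powr (-q-1) / r = r powr (-q-2)" using powr_diff[of r "-q-1" 1] ra a by (simp add: algebra_simps)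
      then show ?thesis by (metis (no_types, lifting) mult.commute mult.left_commute times_divide_eq_right)
    qed
    also have "\<dots> \<le> M * norm h ^ 2"
    proof -
      have "r powr (-q-2) \<le> a powr (-q-2)" using ra a q by (intro powr_mono2') auto
      moreover have "q \<le> q * (q + 1)" using q by simp
      ultimately have "q * r powr (-q-2) \<le> M" unfolding M_def
        by (smt (verit) a mult_mono powr_ge_zero mult_nonneg_nonneg q)
      then show ?thesis by (intro mult_right_mono) auto
    qed
    finally have mid: "q * r powr (-q-1) * (tp + tm - 2 * r) \<le> M * norm h ^ 2" .
    have mid0: "0 \<le> q * r powr (-q-1) * (tp + tm - 2 * r)" using s1 q by simp
    have "u + v = C1 * (ep + em - q * r powr (-q-1) * (tp + tm - 2 * r))"
      unfolding u_def v_def ep_def em_def by (simp add: algebra_simps)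
    then have "\<bar>u + v\<bar> = C1 * \<bar>ep + em - q * r powr (-q-1) * (tp + tm - 2 * r)\<bar>"
      using C1 by (simp add: abs_mult)
    also have "\<dots> \<le> C1 * (3 * M * norm h ^ 2)"
      using ep em mid mid0 C1 by (intro mult_left_mono) auto
    finally show ?thesis by (simp add: mult.assoc)
  qed
  have m: "max \<bar>u\<bar> \<bar>v\<bar> powr (p - 2) \<le> (C1 * L0 * norm h) powr (p - 2)"
    using ub vb p by (intro powr_mono2) auto
  have "\<bar>Phi p u + Phi p v\<bar> \<le> (p - 1) * max \<bar>u\<bar> \<bar>v\<bar> powr (p - 2) * \<bar>u + v\<bar>"
    by (rule Phi_sum_bound[OF p])
  also have "\<dots> \<le> (p - 1) * (C1 * L0 * norm h) powr (p - 2) * (C1 * (3 * M) * norm h ^ 2)"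
    using m uvb p by (intro mult_mono) auto
  finally have P: "\<bar>Phi p u + Phi p v\<bar> \<le> (p - 1) * (C1 * L0 * norm h) powr (p - 2) * (C1 * (3 * M) * norm h ^ 2)" .
  have L00: "0 \<le> L0" unfolding L0_def using q by simp
  have "(C1 * L0 * norm h) powr (p - 2) * norm h ^ 2 * norm h powr (-q) = (C1 * L0) powr (p - 2) * norm h powr (p - q)"
  proof -
    have "norm h ^ 2 = norm h powr 2" using h0 by (simp add: powr_realpow)
    moreover have "(C1 * L0 * norm h) powr (p - 2) = (C1 * L0) powr (p - 2) * norm h powr (p - 2)"
      using C1 L00 by (simp add: powr_mult)
    moreover have "norm h powr (p - 2) * (norm h powr 2 * norm h powr (-q)) = norm h powr (p - q)"
    proof -
      have "norm h powr (p - 2 + (2 + -q)) = norm h powr (p - 2) * (norm h powr 2 * norm h powr (-q))"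
        by (simp only: powr_add)
      moreover have "p - 2 + (2 + -q) = p - q" by simp
      ultimately show ?thesis by simp
    qed
    ultimately show ?thesis by (simp only: mult.assoc)
  qed
  then show ?thesis unfolding S using P
    by (smt (verit) divide_right_mono mult_right_mono powr_ge_zero mult.commute mult.assoc mult.left_commute times_divide_eq_left)
qed



definition Hfun :: "nat \<Rightarrow> real \<Rightarrow> real \<Rightarrow> real \<Rightarrow> 'a::real_normed_vector \<Rightarrow> real" where
  "Hfun N p A C2 z = (if norm z < 1 then A powr (p-1) else C2 powr (p-1) * norm z powr (-(real N * (p-1))))"

lemma Hfun_ge:
  assumes p: "p > 1" and g0: "0 \<le> gz" and gA: "gz \<le> A" and gC: "norm z > 0 \<Longrightarrow> gz \<le> C2 * norm z powr (- real N)"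
  shows "gz powr (p - 1) \<le> Hfun N p A C2 z"
proof (cases "norm z < 1")
  case True then show ?thesis using p g0 gA by (simp add: Hfun_def powr_mono2)
next
  case False
  then have z: "norm z \<ge> 1" by simp
  then have "gz \<le> C2 * norm z powr (- real N)" using gC by (meson less_le_trans zero_less_one)
  then have "gz powr (p - 1) \<le> (C2 * norm z powr (- real N)) powr (p - 1)"
    using p g0 by (intro powr_mono2) auto
  also have "\<dots> = C2 powr (p-1) * norm z powr (-(real N * (p-1)))"
    using g0 \<open>gz \<le> C2 * _\<close> z
    by (subst powr_mult) (auto simp: powr_powr zero_le_mult_iff)
  finally show ?thesis using False by (simp add: Hfun_def)
qed

lemma Hfun_integrable:
  fixes A C2 p :: real
  assumes p: "p > 2"
  shows "integrable lborel (Hfun DIM('a::euclidean_space) p A C2 :: 'a \<Rightarrow> real)"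
proof -
  let ?N = "DIM('a)"
  have "integrable lborel (\<lambda>h::'a. norm h powr (-(real ?N * (p-1))) * indicator {h. 1 \<le> norm h} h)"
  proof (rule integrable.intros[OF tail_powr_bochner])
    have "real ?N * 1 < real ?N * (p - 1)" using p by (intro mult_strict_left_mono) auto
    then show "real ?N < real ?N * (p - 1)" by simp
  qed simp
  then have i1: "integrable lborel (\<lambda>h::'a. C2 powr (p-1) * (norm h powr (-(real ?N * (p-1))) * indicator {h. 1 \<le> norm h} h))"
    by (rule integrable_mult_right)
  have i2: "integrable lborel (\<lambda>h::'a. A powr (p-1) * indicator (ball 0 1) h)"
    by (intro integrable_mult_right integrable_real_indicator) (use emeasure_lborel_ball_finite[of "0::'a" 1] in auto)
  have "integrable lborel (\<lambda>h::'a. A powr (p-1) * indicator (ball 0 1) h + C2 powr (p-1) * (norm h powr (-(real ?N * (p-1))) * indicator {h. 1 \<le> norm h} h))"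
    by (rule Bochner_Integration.integrable_add[OF i2 i1])
  moreover have "(\<lambda>h::'a. A powr (p-1) * indicator (ball 0 1) h + C2 powr (p-1) * (norm h powr (-(real ?N * (p-1))) * indicator {h. 1 \<le> norm h} h)) = Hfun ?N p A C2"
    by (auto simp: Hfun_def indicator_def fun_eq_iff)
  ultimately show ?thesis by simp
qed

lemma F_far_lower:
  assumes p: "p > 1" and gy0: "0 \<le> gy" and g0: "0 \<le> gz" and gH: "gz powr (p - 1) \<le> H" and d: "0 \<le> d" and dd: "d \<le> D"
  shows "Phi p (gy - gz) * d \<ge> - H * D"
proof -
  have H0: "0 \<le> H" using gH powr_ge_zero[of gz "p-1"] by linarith
  show ?thesis
  proof (cases "gy - gz \<ge> 0")
    case True
    then have "Phi p (gy - gz) \<ge> 0" using Phi_mono[OF p True] by simp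
    then have "0 \<le> Phi p (gy - gz) * d" using d by simp
    moreover have "0 \<le> H * D" using H0 d dd by simp
    ultimately show ?thesis by linarith
  next
    case False
    have "Phi p (- gz) \<le> Phi p (gy - gz)" using gy0 by (intro Phi_mono[OF p]) linarith
    moreover have "Phi p (- gz) = - (gz powr (p - 1))" using Phi_nonneg_eq[OF p g0] by (simp add: Phi_minus)
    ultimately have 1: "- H \<le> Phi p (gy - gz)" using gH by simp
    have "Phi p (gy - gz) \<le> 0" using Phi_mono[OF p, of "gy - gz" 0] False by simp
    then have "- H * D \<le> - H * d" using H0 dd by (simp add: mult_left_mono)
    also have "\<dots> \<le> Phi p (gy - gz) * d" using mult_right_mono[OF 1 d] by simp
    finally show ?thesis .
  qed
qed

lemma F_abs_bound:
  assumes p: "p > 1" and "0 \<le> gy" "gy \<le> A" "0 \<le> gz" "gz \<le> A" and d: "0 \<le> d"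
  shows "\<bar>Phi p (gy - gz) * d\<bar> \<le> A powr (p - 1) * d"
proof -
  have "\<bar>Phi p (gy - gz)\<bar> = \<bar>gy - gz\<bar> powr (p - 1)" by (rule Phi_abs[OF p])
  also have "\<dots> \<le> A powr (p - 1)" using assms by (intro powr_mono2) auto
  finally show ?thesis using d by (simp add: abs_mult mult_right_mono)
qed



lemma Hfun_measurable[measurable]: "Hfun N p A C2 \<in> borel_measurable borel"
  unfolding Hfun_def by measurable

lemma Hfun_nonneg: "0 \<le> Hfun N p A C2 z"
  by (simp add: Hfun_def)

lemma key:
  fixes y :: "real^'n" and s p A C2 C1 R1 :: real
  defines "N \<equiv> CARD('n)"
  defines "q \<equiv> real N + s * p"
  defines "g \<equiv> Gprof N s p A C2 C1"
  defines "a \<equiv> norm y / 2"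
  defines "V \<equiv> unit_ball_vol (real N)"
  defines "L0 \<equiv> q * a powr (-q-1)"
  defines "M \<equiv> q * (q+1) * a powr (-q-2)"
  defines "B \<equiv> (p - 1) / 2 * (C1 * L0) powr (p - 2) * (C1 * (3 * M))"
  defines "IH \<equiv> integral\<^sup>L lborel (Hfun N p A C2 :: real^'n \<Rightarrow> real)"
  assumes s: "0 < s" "s < 1" and p: "2 < p" and A: "0 < A" and C2: "0 < C2" and R1: "0 < R1"
    and C1: "C1 = C2 * R1 powr (s*p)" and hR: "C2 * R1 powr (- real N) \<le> A"
    and y: "2 * R1 \<le> norm y"
  shows "\<exists>L. Lsp_has_value s p (\<lambda>z. g (norm z)) y L \<and>
             L \<ge> - (B * (V * N * (a powr (p - q + N) / (p - q + N)))) - a powr (-q) * IH"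
proof -
  have sp: "s * p > 0" using s p by simp
  have a: "a > 0" "R1 \<le> a" using y R1 unfolding a_def by auto
  have q: "q > 0" "q > real N" using sp unfolding q_def by auto
  have C10: "C1 \<ge> 0" using C1 C2 by simp
  have gfar: "\<And>t. t \<ge> a \<Longrightarrow> g t = C1 * t powr (-q)"
    unfolding g_def q_def using a by (intro Gprof_far[OF C1 R1 C2 sp hR]) auto
  have g0: "\<And>t. 0 \<le> g t" unfolding g_def using A C2 C10 by (intro Gprof_nonneg) auto
  have gA: "\<And>t. g t \<le> A" unfolding g_def by (rule Gprof_le_A)
  have gC: "\<And>t. t > 0 \<Longrightarrow> g t \<le> C2 * t powr (- real N)" unfolding g_def by (intro Gprof_le_C2) auto
  have [measurable]: "g \<in> borel_measurable borel" unfolding g_def by measurable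
  define F where "F = (\<lambda>z::real^'n. Phi p (g (norm y) - g (norm z)) * dist y z powr (-q))"
  define S where "S = (\<lambda>h. (F (y + h) + F (y - h)) / 2)"
  have [measurable]: "F \<in> borel_measurable borel" unfolding F_def by measurable
  have [measurable]: "S \<in> borel_measurable borel" unfolding S_def by measurable
  have N: "DIM(real^'n) = N" unfolding N_def by simp
  have Fb: "\<bar>F z\<bar> \<le> A powr (p-1) * dist y z powr (-q)" for z
    unfolding F_def using p by (intro F_abs_bound) (auto simp: g0 gA)
  have Fpb: "\<bar>F (y + h)\<bar> \<le> A powr (p-1) * norm h powr (-q)" for h
    using Fb[of "y+h"] by (simp add: dist_norm)
  have Fmb: "\<bar>F (y - h)\<bar> \<le> A powr (p-1) * norm h powr (-q)" for h
    using Fb[of "y-h"] by (simp add: dist_norm)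
  have near: "\<bar>S h\<bar> \<le> B * norm h powr (p - q)" if "norm h \<le> a" for h
    unfolding S_def F_def B_def L0_def M_def
    using near_bound[OF q(1) _ C10 a(1) _ that gfar] p a_def by simp
  have farlow: "S h \<ge> - ((Hfun N p A C2 (y + h) + Hfun N p A C2 (y - h)) / 2 * a powr (-q))"
    if h: "a \<le> norm h" for h
  proof -
    have d: "norm h powr (-q) \<le> a powr (-q)" using h a q by (intro powr_mono2') auto
    have hg: "g (norm z) powr (p - 1) \<le> Hfun N p A C2 z" for z
      using p by (intro Hfun_ge) (auto simp: g0 gA gC)
    have "Phi p (g (norm y) - g (norm (y + h))) * norm h powr (-q) \<ge> - Hfun N p A C2 (y + h) * a powr (-q)"
      by (rule F_far_lower[OF _ g0 g0 hg _ d]) (use p in auto)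
    moreover have "dist y (y + h) = norm h" by (simp add: dist_norm)
    ultimately have 1: "F (y + h) \<ge> - Hfun N p A C2 (y + h) * a powr (-q)"
      unfolding F_def by simp
    have "Phi p (g (norm y) - g (norm (y - h))) * norm h powr (-q) \<ge> - Hfun N p A C2 (y - h) * a powr (-q)"
      by (rule F_far_lower[OF _ g0 g0 hg _ d]) (use p in auto)
    moreover have "dist y (y - h) = norm h" by (simp add: dist_norm)
    ultimately have 2: "F (y - h) \<ge> - Hfun N p A C2 (y - h) * a powr (-q)"
      unfolding F_def by simp
    show ?thesis unfolding S_def using 1 2 by (simp add: field_simps)
  qed
  have tailI: "integrable lborel (\<lambda>h::real^'n. norm h powr (-q) * indicator {h. \<rho> \<le> norm h} h)" if "\<rho> > 0" for \<rho>
    by (rule integrable.intros[OF tail_powr_bochner]) (use q that N in auto)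
  have pq: "p - q > - real N" using s p unfolding q_def by (simp add: algebra_simps)
  have ballB: "has_bochner_integral lborel (\<lambda>h::real^'n. norm h powr (p - q) * indicator (ball 0 \<rho>) h)
       (V * N * (\<rho> powr (p - q + N) / (p - q + N)))" if "\<rho> > 0" for \<rho>
    using ball_powr_bochner[of "p - q" \<rho>, where 'a="real^'n"] pq that unfolding V_def N by simp
  have ballI: "integrable lborel (\<lambda>h::real^'n. norm h powr (p - q) * indicator (ball 0 \<rho>) h)" if "\<rho> > 0" for \<rho>
    using ballB[OF that] by (rule integrable.intros)
  have ballV: "integral\<^sup>L lborel (\<lambda>h::real^'n. norm h powr (p - q) * indicator (ball 0 \<rho>) h) = V * N * (\<rho> powr (p - q + N) / (p - q + N))"
    if "\<rho> > 0" for \<rho>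
    using ballB[OF that] by (rule has_bochner_integral_integral_eq)
  define Dom where "Dom = (\<lambda>h::real^'n. B * (norm h powr (p - q) * indicator (ball 0 a) h)
      + A powr (p-1) * (norm h powr (-q) * indicator {h. a \<le> norm h} h))"
  have DomI: "integrable lborel Dom" unfolding Dom_def
    by (intro Bochner_Integration.integrable_add integrable_mult_right ballI tailI a)
  have SDom: "\<bar>S h\<bar> \<le> Dom h" for h
  proof (cases "norm h < a")
    case True
    then show ?thesis using near[of h] unfolding Dom_def by (simp add: indicator_def)
  next
    case False
    have "\<bar>S h\<bar> \<le> (\<bar>F (y + h)\<bar> + \<bar>F (y - h)\<bar>) / 2" unfolding S_def by simp
    also have "\<dots> \<le> A powr (p-1) * norm h powr (-q)" using Fpb[of h] Fmb[of h] by simp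
    finally show ?thesis using False unfolding Dom_def by (simp add: indicator_def)
  qed
  have SI: "integrable lborel S"
  proof (rule Bochner_Integration.integrable_bound[OF DomI])
    show "S \<in> borel_measurable lborel" by measurable
    show "AE x in lborel. norm (S x) \<le> norm (Dom x)"
      by (intro AE_I2) (metis abs_ge_self order_trans SDom real_norm_def)
  qed
  define Fe where "Fe = (\<lambda>eps z. indicator {z. eps \<le> dist y z} z * F z)"
  have Fe_meas[measurable]: "Fe eps \<in> borel_measurable borel" for eps
  proof -
    have [measurable]: "{z::real^'n. eps \<le> dist y z} \<in> sets borel" by measurable
    show ?thesis unfolding Fe_def by measurable
  qed
  have ind_meas[measurable]: "{h::real^'n. eps \<le> norm h} \<in> sets borel" for eps by measurable
  have trp: "(\<lambda>h. Fe eps (y + 1 *\<^sub>R h)) = (\<lambda>h. indicator {h. eps \<le> norm h} h * F (y + h))" for eps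
    unfolding Fe_def by (simp add: dist_norm indicator_def)
  have trm: "(\<lambda>h. Fe eps (y + (-1) *\<^sub>R h)) = (\<lambda>h. indicator {h. eps \<le> norm h} h * F (y - h))" for eps
    unfolding Fe_def by (simp add: dist_norm indicator_def)
  have IPp: "integrable lborel (\<lambda>h. indicator {h. eps \<le> norm h} h * F (y + h))" if "eps > 0" for eps
  proof (rule Bochner_Integration.integrable_bound[OF integrable_mult_right[OF tailI[OF that], of "A powr (p-1)"]])
    show "(\<lambda>h. indicator {h. eps \<le> norm h} h * F (y + h)) \<in> borel_measurable lborel" by measurable
    show "AE x in lborel. norm (indicator {h. eps \<le> norm h} x * F (y + x)) \<le> norm (A powr (p-1) * (norm x powr (-q) * indicator {h. eps \<le> norm h} x))"
      by (intro AE_I2) (use Fpb in \<open>auto simp: indicator_def\<close>)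
  qed
  have IPm: "integrable lborel (\<lambda>h. indicator {h. eps \<le> norm h} h * F (y - h))" if "eps > 0" for eps
  proof (rule Bochner_Integration.integrable_bound[OF integrable_mult_right[OF tailI[OF that], of "A powr (p-1)"]])
    show "(\<lambda>h. indicator {h. eps \<le> norm h} h * F (y - h)) \<in> borel_measurable lborel" by measurable
    show "AE x in lborel. norm (indicator {h. eps \<le> norm h} x * F (y - x)) \<le> norm (A powr (p-1) * (norm x powr (-q) * indicator {h. eps \<le> norm h} x))"
      by (intro AE_I2) (use Fmb in \<open>auto simp: indicator_def\<close>)
  qed
  have FeI: "integrable lborel (Fe eps)" if "eps > 0" for eps
    using integral_affine1(2)[of 1 "Fe eps" y] IPp[OF that] trp[of eps] by simp
  have FeV: "integral\<^sup>L lborel (Fe eps) = integral\<^sup>L lborel (\<lambda>h. indicator {h. eps \<le> norm h} h * S h)" if "eps > 0" for eps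
  proof -
    have 1: "integral\<^sup>L lborel (Fe eps) = integral\<^sup>L lborel (\<lambda>h. indicator {h. eps \<le> norm h} h * F (y + h))"
      using integral_affine1(1)[of 1 "Fe eps" y] trp[of eps] by simp
    have 2: "integral\<^sup>L lborel (Fe eps) = integral\<^sup>L lborel (\<lambda>h. indicator {h. eps \<le> norm h} h * F (y - h))"
      using integral_affine1(1)[of "-1" "Fe eps" y] trm[of eps] by simp
    have "integral\<^sup>L lborel (\<lambda>h. indicator {h. eps \<le> norm h} h * S h) =
        integral\<^sup>L lborel (\<lambda>h. (indicator {h. eps \<le> norm h} h * F (y + h) + indicator {h. eps \<le> norm h} h * F (y - h)) / 2)"
      unfolding S_def by (simp add: algebra_simps)
    also have "\<dots> = (integral\<^sup>L lborel (\<lambda>h. indicator {h. eps \<le> norm h} h * F (y + h)) + integral\<^sup>L lborel (\<lambda>h. indicator {h. eps \<le> norm h} h * F (y - h))) / 2"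
      using IPp[OF that] IPm[OF that] by simp
    finally show ?thesis using 1 2 by simp
  qed
  have trunc: "Lsp_trunc s p (\<lambda>z. g (norm z)) y eps = integral\<^sup>L lborel (\<lambda>h. indicator {h. eps \<le> norm h} h * S h)"
    and setI: "set_integrable lebesgue {z. eps \<le> dist y z} (\<lambda>z. Phi p (g (norm y) - g (norm z)) * dist y z powr (- (real CARD('n) + s * p)))"
    if "eps > 0" for eps
  proof -
    have eq: "(\<lambda>z. indicator {z. eps \<le> dist y z} z *\<^sub>R (Phi p (g (norm y) - g (norm z)) * dist y z powr (- (real CARD('n) + s * p)))) = Fe eps"
      unfolding Fe_def F_def q_def N_def by simp
    show "Lsp_trunc s p (\<lambda>z. g (norm z)) y eps = integral\<^sup>L lborel (\<lambda>h. indicator {h. eps \<le> norm h} h * S h)"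
      unfolding Lsp_trunc_def set_lebesgue_integral_def eq
      using integral_completion[of "Fe eps" lborel] FeV[OF that] by simp
    show "set_integrable lebesgue {z. eps \<le> dist y z} (\<lambda>z. Phi p (g (norm y) - g (norm z)) * dist y z powr (- (real CARD('n) + s * p)))"
      unfolding set_integrable_def eq
      using integrable_completion[of "Fe eps" lborel] FeI[OF that] by simp
  qed
  define L where "L = integral\<^sup>L lborel S"
  have ballS: "\<bar>integral\<^sup>L lborel (\<lambda>h. indicator (ball 0 eps) h * S h)\<bar> \<le> B * (V * N * (eps powr (p - q + N) / (p - q + N)))"
    if e: "0 < eps" "eps \<le> a" for eps
  proof -
    have I1: "integrable lborel (\<lambda>h. indicator (ball 0 eps) h * S h)"
      using integrable_mult_indicator[of "ball 0 eps" lborel S] SI by simp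
    have "\<bar>integral\<^sup>L lborel (\<lambda>h. indicator (ball 0 eps) h * S h)\<bar> \<le> integral\<^sup>L lborel (\<lambda>h. norm (indicator (ball 0 eps) h * S h))"
      using integral_norm_bound[of lborel "\<lambda>h. indicator (ball 0 eps) h * S h"] by simp
    also have "\<dots> \<le> integral\<^sup>L lborel (\<lambda>h::real^'n. B * (norm h powr (p - q) * indicator (ball 0 eps) h))"
    proof (rule Bochner_Integration.integral_mono)
      show "integrable lborel (\<lambda>h. norm (indicator (ball 0 eps) h * S h))"
        using I1 by (rule integrable_norm)
      show "integrable lborel (\<lambda>h::real^'n. B * (norm h powr (p - q) * indicator (ball 0 eps) h))"
        by (intro integrable_mult_right ballI e)
      fix h :: "real^'n"
      show "norm (indicator (ball 0 eps) h * S h) \<le> B * (norm h powr (p - q) * indicator (ball 0 eps) h)"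
      proof (cases "norm h < eps")
        case True then show ?thesis using near[of h] e by (simp add: indicator_def)
      next
        case False then show ?thesis by (simp add: indicator_def)
      qed
    qed
    also have "\<dots> = B * (V * N * (eps powr (p - q + N) / (p - q + N)))"
      using ballV[OF e(1)] by simp
    finally show ?thesis .
  qed
  have tdiff: "\<bar>Lsp_trunc s p (\<lambda>z. g (norm z)) y eps - L\<bar> \<le> B * (V * N * (eps powr (p - q + N) / (p - q + N)))"
    if e: "0 < eps" "eps \<le> a" for eps
  proof -
    have "(\<lambda>h. indicator {h. eps \<le> norm h} h * S h) = (\<lambda>h. S h - indicator (ball 0 eps) h * S h)"
      by (auto simp: indicator_def fun_eq_iff)
    moreover have "integrable lborel (\<lambda>h. indicator (ball 0 eps) h * S h)"
      using integrable_mult_indicator[of "ball 0 eps" lborel S] SI by simp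
    ultimately have "Lsp_trunc s p (\<lambda>z. g (norm z)) y eps = L - integral\<^sup>L lborel (\<lambda>h. indicator (ball 0 eps) h * S h)"
      unfolding trunc[OF e(1)] L_def using SI by simp
    then show ?thesis using ballS[OF e] by simp
  qed
  have lim: "(Lsp_trunc s p (\<lambda>z. g (norm z)) y \<longlongrightarrow> L) (at_right 0)"
  proof (rule LIM_zero_cancel, rule Lim_null_comparison)
    show "\<forall>\<^sub>F x in at_right 0. norm (Lsp_trunc s p (\<lambda>z. g (norm z)) y x - L) \<le> B * (V * N * (x powr (p - q + N) / (p - q + N)))"
      unfolding eventually_at_right[OF a(1)] using tdiff by (intro exI[of _ a]) (auto simp: a)
    have "0 < p - q + N" using pq by simp
    moreover have "((\<lambda>x::real. x) \<longlongrightarrow> 0) (at_right 0)" by (rule tendsto_ident_at)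
    moreover have "\<forall>\<^sub>F x in at_right 0. 0 \<le> (x::real)" by (rule eventually_at_rightI[of 0 1]) auto
    ultimately have "((\<lambda>x. x powr (p - q + N)) \<longlongrightarrow> 0) (at_right 0)"
      using tendsto_zero_powrI[of "\<lambda>x::real. x" "at_right 0" "\<lambda>_. p - q + N" "p - q + N"] by simp
    then show "((\<lambda>x. B * (V * N * (x powr (p - q + N) / (p - q + N)))) \<longlongrightarrow> 0) (at_right 0)"
      by (auto intro!: tendsto_mult_right_zero tendsto_divide_zero)
  qed
  have LV: "Lsp_has_value s p (\<lambda>z. g (norm z)) y L"
    unfolding Lsp_has_value_def using setI lim by blast
  define Low where "Low = (\<lambda>h::real^'n. - (B * (norm h powr (p - q) * indicator (ball 0 a) h))
      - (Hfun N p A C2 (y + h) + Hfun N p A C2 (y - h)) / 2 * a powr (-q))"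
  have HIp: "integrable lborel (\<lambda>h::real^'n. Hfun N p A C2 (y + h))"
    using integral_affine1(2)[of 1 "Hfun N p A C2" y] Hfun_integrable[OF p, where 'a="real^'n"] N by simp
  have HIm: "integrable lborel (\<lambda>h::real^'n. Hfun N p A C2 (y - h))"
    using integral_affine1(2)[of "-1" "Hfun N p A C2" y] Hfun_integrable[OF p, where 'a="real^'n"] N by simp
  have HVp: "integral\<^sup>L lborel (\<lambda>h::real^'n. Hfun N p A C2 (y + h)) = IH"
    using integral_affine1(1)[of 1 "Hfun N p A C2" y] unfolding IH_def by simp
  have HVm: "integral\<^sup>L lborel (\<lambda>h::real^'n. Hfun N p A C2 (y - h)) = IH"
    using integral_affine1(1)[of "-1" "Hfun N p A C2" y] unfolding IH_def by simp
  have bI: "integrable lborel (\<lambda>h::real^'n. B * (norm h powr (p - q) * indicator (ball 0 a) h))"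
    by (intro integrable_mult_right ballI a)
  have LowI: "integrable lborel Low" unfolding Low_def
    by (intro Bochner_Integration.integrable_diff integrable_minus bI integrable_mult_left integrable_divide
        Bochner_Integration.integrable_add HIp HIm)
  have LowV: "integral\<^sup>L lborel Low = - (B * (V * N * (a powr (p - q + N) / (p - q + N)))) - a powr (-q) * IH"
  proof -
    have "integral\<^sup>L lborel Low = - integral\<^sup>L lborel (\<lambda>h::real^'n. B * (norm h powr (p - q) * indicator (ball 0 a) h))
       - integral\<^sup>L lborel (\<lambda>h. (Hfun N p A C2 (y + h) + Hfun N p A C2 (y - h)) / 2 * a powr (-q))"
      unfolding Low_def
      by (intro Bochner_Integration.integral_diff[THEN trans] arg_cong2[where f="(-)"] integral_minus
          integrable_minus bI integrable_mult_left integrable_divide Bochner_Integration.integrable_add HIp HIm) simp_all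
    also have "integral\<^sup>L lborel (\<lambda>h. (Hfun N p A C2 (y + h) + Hfun N p A C2 (y - h)) / 2 * a powr (-q)) = IH * a powr (-q)"
      using HIp HIm HVp HVm by simp
    also have "integral\<^sup>L lborel (\<lambda>h::real^'n. B * (norm h powr (p - q) * indicator (ball 0 a) h)) = B * (V * N * (a powr (p - q + N) / (p - q + N)))"
      using ballV[OF a(1)] by simp
    finally show ?thesis by simp
  qed
  have LowS: "Low h \<le> S h" for h
  proof (cases "norm h < a")
    case True
    have "Low h \<le> - (B * norm h powr (p - q))"
      unfolding Low_def using True Hfun_nonneg[of N p A C2 "y + h"] Hfun_nonneg[of N p A C2 "y - h"]
      by (simp add: indicator_def)
    also have "\<dots> \<le> S h" using near[of h] True by simp
    finally show ?thesis .
  next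
    case False
    then show ?thesis unfolding Low_def using farlow[of h] by (simp add: indicator_def)
  qed
  have "integral\<^sup>L lborel Low \<le> L"
    unfolding L_def by (rule Bochner_Integration.integral_mono[OF LowI SI LowS])
  then show ?thesis using LV LowV by auto
qed



theorem mainTheorem4:
  fixes s p A C2 R :: real
  defines "N \<equiv> CARD('n::finite)"
  defines "\<beta> \<equiv> 1 / (real N * (p - 2) + s * p)"
  assumes s: "0 < s" "s < 1"
    and p: "p > 2"
    and A: "A > 0" and C2: "C2 > 0"
    and R_def: "R = (C2 / A) powr (1 / real N)"
    and R_gt: "R > 1"
  shows "\<exists>Rstar > R. \<forall>R1 \<ge> Rstar. \<forall>y :: real^'n.
           norm y \<ge> 2 * R1 \<longrightarrow>
           (let C1 = C2 * R1 powr (s * p);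
                g = Gprof N s p A C2 C1;
                r = norm y
            in \<exists>L D. Lsp_has_value s p (\<lambda>z :: real^'n. g (norm z)) y L
                    \<and> ((\<lambda>t. t ^ N * g t) has_real_derivative D) (at r)
                    \<and> L - \<beta> * (r powr (1 - real N) * D) \<ge> 0)"
proof -
  define q where "q = real N + s * p"
  define V where "V = unit_ball_vol (real N)"
  define IH where "IH = integral\<^sup>L lborel (Hfun N p A C2 :: real^'n \<Rightarrow> real)"
  define e1 where "e1 = real N * (p - 2) + s * p"
  define K1 where "K1 = (p - 1) / 2 * q powr (p - 2) * (3 * (q * (q + 1))) * (V * N / (p - q + N))"
  define K2 where "K2 = \<beta> * (s * p) * 2 powr (-q)"
  have sp: "s * p > 0" using s p by simp
  have N1: "N \<ge> 1" unfolding N_def by (simp add: Suc_leI)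
  have q: "q > 0" using sp unfolding q_def by simp
  have e1: "e1 > 0" unfolding e1_def using p sp by (simp add: add_nonneg_pos)
  have \<beta>: "\<beta> > 0" unfolding \<beta>_def using e1 unfolding e1_def by simp
  have pqN: "p - q + N > 0" unfolding q_def using s p by (simp add: algebra_simps)
  have V: "V > 0" unfolding V_def by simp
  have K1: "K1 > 0" unfolding K1_def using p q pqN V N1 by (intro mult_pos_pos divide_pos_pos) auto
  have K2: "K2 > 0" unfolding K2_def using \<beta> sp by simp
  have IH0: "IH \<ge> 0" unfolding IH_def by (rule integral_nonneg_AE) (simp add: Hfun_nonneg)
  define T1 where "T1 = (K2 / (2 * K1 * C2 powr (p - 2))) powr (-1 / e1)"
  define T2 where "T2 = (2 * IH / (K2 * C2) + 1) powr (1 / (s * p))"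
  define Rstar where "Rstar = max (R + 1) (max T1 T2)"
  show ?thesis
  proof (intro exI[of _ Rstar] conjI allI impI)
    show "R < Rstar" unfolding Rstar_def by simp
    fix R1 :: real and y :: "real^'n"
    assume R1: "Rstar \<le> R1" and y: "2 * R1 \<le> norm y"
    have R1R: "R < R1" "R1 > 0" "T1 \<le> R1" "T2 \<le> R1" using R1 R_gt unfolding Rstar_def by auto
    define C1 where "C1 = C2 * R1 powr (s * p)"
    define g where "g = Gprof N s p A C2 C1"
    define r where "r = norm y"
    define a where "a = norm y / 2"
    have a: "a \<ge> R1" "a > 0" using y R1R unfolding a_def by auto
    have C10: "C1 > 0" unfolding C1_def using C2 R1R by simp
    have hR: "C2 * R1 powr (- real N) \<le> A"
    proof -
      have "R powr real N = C2 / A" unfolding R_def using A C2 N1 by (simp add: powr_powr)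
      have "R1 powr (- real N) \<le> R powr (- real N)" using R1R R_gt by (intro powr_mono2') auto
      also have "\<dots> = A / C2" using \<open>R powr real N = C2 / A\<close> R_gt by (simp add: powr_minus)
      finally show ?thesis using C2 by (simp add: field_simps)
    qed
    obtain L where LV: "Lsp_has_value s p (\<lambda>z. g (norm z)) y L"
      and Lb: "L \<ge> - ((p - 1) / 2 * (C1 * (q * a powr (-q-1))) powr (p - 2) * (C1 * (3 * (q * (q+1) * a powr (-q-2))))
                 * (V * N * (a powr (p - q + N) / (p - q + N)))) - a powr (-q) * IH"
      using key[OF s p A C2 R1R(2) C1_def hR[unfolded N_def] y[unfolded a_def[symmetric]]]
      unfolding g_def q_def V_def IH_def N_def a_def by blast
    show "let C1 = C2 * R1 powr (s * p); g = Gprof N s p A C2 C1; r = norm y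
          in \<exists>L D. Lsp_has_value s p (\<lambda>z :: real^'n. g (norm z)) y L
                    \<and> ((\<lambda>t. t ^ N * g t) has_real_derivative D) (at r)
                    \<and> L - \<beta> * (r powr (1 - real N) * D) \<ge> 0"
    proof -
      define D where "D = C1 * ((-(s*p)) * r powr (-(s*p) - 1))"
      have r: "r = 2 * a" "r > R1" unfolding r_def a_def using y R1R by auto
      have deriv: "((\<lambda>t. t ^ N * g t) has_real_derivative D) (at r)"
      proof (rule has_field_derivative_transform_within_open[where S="{R1<..}"])
        show "((\<lambda>t. C1 * t powr (-(s*p))) has_real_derivative D) (at r)"
          unfolding D_def using r R1R by (intro DERIV_cmult has_real_derivative_powr) auto
        show "open {R1<..}" by simp
        show "r \<in> {R1<..}" using r by simp
        fix t assume t: "t \<in> {R1<..}"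
        then have t0: "t > 0" using R1R by simp
        have "g t = C1 * t powr (-(real N + s*p))"
          unfolding g_def using t by (intro Gprof_far[OF C1_def R1R(2) C2 sp hR]) auto
        then show "C1 * t powr (-(s*p)) = t ^ N * g t"
          using t0 by (simp add: powr_realpow[symmetric] mult.left_commute powr_add[symmetric])
      qed
      have rD: "r powr (1 - real N) * D = - (s * p) * C1 * r powr (-q)"
      proof -
        have "r powr (1 - real N) * r powr (-(s*p) - 1) = r powr (-q)"
          using r R1R unfolding q_def by (simp add: powr_add[symmetric])
        then show ?thesis unfolding D_def by (simp add: algebra_simps)
      qed
      have rq: "r powr (-q) = 2 powr (-q) * a powr (-q)" using r a by (simp add: powr_mult)
      define Term1 where "Term1 = (p - 1) / 2 * (C1 * (q * a powr (-q-1))) powr (p - 2) * (C1 * (3 * (q * (q+1) * a powr (-q-2))))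
                 * (V * N * (a powr (p - q + N) / (p - q + N)))"
      have T1eq: "Term1 = K1 * (C1 powr (p - 2) * a powr (-q*(p-2) - s*p)) * (C1 * a powr (-q))"
      proof -
        have "(C1 * (q * a powr (-q-1))) powr (p - 2) = C1 powr (p-2) * q powr (p-2) * a powr ((-q-1)*(p-2))"
          using C10 q a by (simp add: powr_mult powr_powr)
        moreover have "a powr ((-q-1)*(p-2)) * a powr (-q-2) * a powr (p - q + N) = a powr (-q*(p-2) - s*p) * a powr (-q)"
        proof -
          have "a powr ((-q-1)*(p-2)) * a powr (-q-2) * a powr (p - q + N) = a powr ((-q-1)*(p-2) + (-q-2) + (p - q + N))"
            by (simp only: powr_add)
          also have "(-q-1)*(p-2) + (-q-2) + (p - q + N) = (-q*(p-2) - s*p) + (-q)"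
            unfolding q_def by (simp add: algebra_simps)
          also have "a powr \<dots> = a powr (-q*(p-2) - s*p) * a powr (-q)" by (rule powr_add)
          finally show ?thesis .
        qed
        ultimately show ?thesis unfolding Term1_def K1_def
          by (simp add: algebra_simps)
      qed
      have fac: "K1 * (C1 powr (p - 2) * a powr (-q*(p-2) - s*p)) \<le> K2 / 2"
      proof -
        have "q * (p - 2) > 0" using q p by simp
        then have ex: "-q*(p-2) - s*p < 0" using sp by linarith
        have f1: "C1 powr (p - 2) * a powr (-q*(p-2) - s*p) \<le> C1 powr (p - 2) * R1 powr (-q*(p-2) - s*p)"
          using a R1R ex by (intro mult_left_mono powr_mono2') auto
        have f2: "C1 powr (p - 2) = C2 powr (p-2) * R1 powr (s*p*(p-2))"
          unfolding C1_def using C2 R1R by (simp add: powr_mult powr_powr)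
        have f3: "R1 powr (s*p*(p-2)) * R1 powr (-q*(p-2) - s*p) = R1 powr (- e1)"
        proof -
          have "R1 powr (s*p*(p-2)) * R1 powr (-q*(p-2) - s*p) = R1 powr (s*p*(p-2) + (-q*(p-2) - s*p))"
            by (rule powr_add[symmetric])
          also have "s*p*(p-2) + (-q*(p-2) - s*p) = - e1" unfolding q_def e1_def by (simp add: algebra_simps)
          finally show ?thesis .
        qed
        have f4: "R1 powr (- e1) \<le> T1 powr (- e1)"
          using R1R e1 K1 K2 C2 unfolding T1_def by (intro powr_mono2') auto
        have f5: "T1 powr (- e1) = K2 / (2 * K1 * C2 powr (p - 2))"
          unfolding T1_def using e1 K1 K2 C2 by (simp add: powr_powr)
        have "C1 powr (p - 2) * a powr (-q*(p-2) - s*p) \<le> C2 powr (p-2) * R1 powr (- e1)"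
          using f1 f2 f3 by (simp add: mult.assoc)
        also have "\<dots> \<le> C2 powr (p-2) * (K2 / (2 * K1 * C2 powr (p - 2)))"
          using f4 f5 by (intro mult_left_mono) auto
        finally have "C1 powr (p - 2) * a powr (-q*(p-2) - s*p) \<le> C2 powr (p-2) * (K2 / (2 * K1 * C2 powr (p - 2)))" .
        then have "K1 * (C1 powr (p - 2) * a powr (-q*(p-2) - s*p)) \<le> K1 * (C2 powr (p-2) * (K2 / (2 * K1 * C2 powr (p - 2))))"
          using K1 by (intro mult_left_mono) auto
        also have "\<dots> = K2 / 2" using K1 C2 by (simp add: field_simps)
        finally show ?thesis .
      qed
      have IHb: "IH \<le> K2 / 2 * C1"
      proof -
        have "2 * IH / (K2 * C2) + 1 = T2 powr (s * p)" unfolding T2_def using sp IH0 K2 C2 s p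
          by (simp add: powr_powr)
        also have "\<dots> \<le> R1 powr (s * p)" using R1R sp IH0 K2 C2 unfolding T2_def by (intro powr_mono2) auto
        finally have "2 * IH / (K2 * C2) \<le> R1 powr (s * p)" by simp
        then have "2 * IH \<le> K2 * C2 * R1 powr (s * p)" using K2 C2 by (simp add: field_simps)
        then show ?thesis unfolding C1_def by (simp add: field_simps)
      qed
      have aq: "a powr (-q) > 0" using a by simp
      have "Term1 \<le> K2 / 2 * (C1 * a powr (-q))"
        unfolding T1eq using fac C10 aq by (intro mult_right_mono) auto
      moreover have "a powr (-q) * IH \<le> K2 / 2 * (C1 * a powr (-q))"
        using IHb aq by (simp add: mult.commute mult.left_commute mult_left_mono)
      ultimately have "Term1 + a powr (-q) * IH \<le> K2 * (C1 * a powr (-q))" by simp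
      also have "K2 * (C1 * a powr (-q)) = \<beta> * ((s * p) * C1 * r powr (-q))"
        unfolding K2_def rq by (simp add: algebra_simps)
      finally have fin: "Term1 + a powr (-q) * IH \<le> \<beta> * ((s * p) * C1 * r powr (-q))" .
      have "L - \<beta> * (r powr (1 - real N) * D) \<ge> 0"
        unfolding rD using Lb fin unfolding Term1_def by (simp add: algebra_simps)
      then show ?thesis unfolding Let_def using LV deriv unfolding g_def C1_def r_def by blast
    qed
  qed
qed


end
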